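(* The distribution of the rescaled magnetization under the Gibbs measure satisfies $$\mu_{N,\beta,\alpha}\Big(\sqrt{\tfrac{N}{s_N}}\,m\in\cdot\Big)\star\mathcal{N}(0,A^{-1})=z_N^{-1}\exp\Big\{-\tfrac{N}{s_N}\varphi_N\Big(\sqrt{\tfrac{s_N}{N}}\,x\Big)\Big\}\,\mathrm{d}^{s_N}x,$$ where $\star$ denotes convolution, $$\varphi_N(x)=\tfrac12x^TAx-\sum_{k=1}^{s_N}\log\cosh(x^TAe_k)=\tfrac{\beta}{2}\sum_{k}x_k^2+\tfrac{\alpha}{2}\sum_k x_k(x_{k-1}+x_{k+1})-\sum_k\log\cosh\big(\beta x_k+\alpha(x_{k-1}+x_{k+1})\big),$$ and $z_N=\int_{\mathbb{R}^{s_N}}\exp\{-\frac{N}{s_N}\varphi_N(\sqrt{s_N/N}\,x)\}\,\mathrm{d}^{s_N}x$.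
   Context: Parameters $\beta>2\alpha>0$. Let $(s_N)$ be a non-decreasing sequence of positive integers with $s_N$ dividing $N$; $\{1,\dots,N\}$ is partitioned into blocks $S_1,\dots,S_{s_N}$ of size $N/s_N$, block indices cyclic ($x_0=x_{s_N}$, $x_{s_N+1}=x_1$). For $\sigma\in\{-1,+1\}^N$, $m_k=\frac{s_N}{N}\sum_{i\in S_k}\sigma_i$, $m=(m_1,\dots,m_{s_N})$. $A=\beta I+\alpha(P+P^T)$ with $P$ the $s_N\times s_N$ cyclic shift matrix (positive definite since $\beta>2\alpha$), and $e_k$ the standard basis vectors of $\mathbb{R}^{s_N}$. The Gibbs measure is $\mu_{N,\beta,\alpha}(\sigma)=Z_{N,\beta,\alpha}^{-1}\exp\{\frac{N}{2s_N}m^TAm\}2^{-N}$ on $\{-1,+1\}^N$. *)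

theory Defs
  imports "HOL-Probability.Probability"
begin

text \<open>Conventions: spins are indexed 0..N-1, blocks 0..s-1; spin i lies in block
  i div (N div s). Vectors of R^s are functions nat => real on the index set {0..<s},
  the space R^s with Lebesgue measure is the product measure PiM {0..<s} (%_. lborel).\<close>

definition Rn :: "nat \<Rightarrow> (nat \<Rightarrow> real) measure" where
  "Rn s = PiM {0..<s} (\<lambda>_. lborel)"

text \<open>The matrix A = beta I + alpha (P + P^T), P the s x s cyclic shift.\<close>
definition Amat :: "real \<Rightarrow> real \<Rightarrow> nat \<Rightarrow> nat \<Rightarrow> nat \<Rightarrow> real" where
  "Amat \<beta> \<alpha> s i j =
     \<beta> * (if i = j then 1 else 0)
     + \<alpha> * ((if j = Suc i mod s then 1 else 0) + (if i = Suc j mod s then 1 else 0))"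

definition quadA :: "real \<Rightarrow> real \<Rightarrow> nat \<Rightarrow> (nat \<Rightarrow> real) \<Rightarrow> real" where
  "quadA \<beta> \<alpha> s x = (\<Sum>i<s. \<Sum>j<s. x i * Amat \<beta> \<alpha> s i j * x j)"

definition Acol :: "real \<Rightarrow> real \<Rightarrow> nat \<Rightarrow> (nat \<Rightarrow> real) \<Rightarrow> nat \<Rightarrow> real" where
  "Acol \<beta> \<alpha> s x k = (\<Sum>i<s. x i * Amat \<beta> \<alpha> s i k)"

definition phiN :: "real \<Rightarrow> real \<Rightarrow> nat \<Rightarrow> (nat \<Rightarrow> real) \<Rightarrow> real" where
  "phiN \<beta> \<alpha> s x = quadA \<beta> \<alpha> s x / 2 - (\<Sum>k<s. ln (cosh (Acol \<beta> \<alpha> s x k)))"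

definition spins :: "nat \<Rightarrow> (nat \<Rightarrow> real) set" where
  "spins N = PiE {0..<N} (\<lambda>_. {-1, 1})"

definition magn :: "nat \<Rightarrow> nat \<Rightarrow> (nat \<Rightarrow> real) \<Rightarrow> nat \<Rightarrow> real" where
  "magn N s \<sigma> k = (real s / real N) * (\<Sum>i\<in>{i. i < N \<and> i div (N div s) = k}. \<sigma> i)"

definition gibbs_weight :: "real \<Rightarrow> real \<Rightarrow> nat \<Rightarrow> nat \<Rightarrow> (nat \<Rightarrow> real) \<Rightarrow> real" where
  "gibbs_weight \<beta> \<alpha> N s \<sigma> =
     exp (real N / (2 * real s) * quadA \<beta> \<alpha> s (magn N s \<sigma>)) * 2 powr (- real N)"

definition gibbs_Z :: "real \<Rightarrow> real \<Rightarrow> nat \<Rightarrow> nat \<Rightarrow> real" where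
  "gibbs_Z \<beta> \<alpha> N s = (\<Sum>\<sigma>\<in>spins N. gibbs_weight \<beta> \<alpha> N s \<sigma>)"

definition gibbs :: "real \<Rightarrow> real \<Rightarrow> nat \<Rightarrow> nat \<Rightarrow> (nat \<Rightarrow> real) measure" where
  "gibbs \<beta> \<alpha> N s = density (count_space (spins N))
      (\<lambda>\<sigma>. ennreal (gibbs_weight \<beta> \<alpha> N s \<sigma> / gibbs_Z \<beta> \<alpha> N s))"

definition magn_law :: "real \<Rightarrow> real \<Rightarrow> nat \<Rightarrow> nat \<Rightarrow> (nat \<Rightarrow> real) measure" where
  "magn_law \<beta> \<alpha> N s = distr (gibbs \<beta> \<alpha> N s) (Rn s)
      (\<lambda>\<sigma>. \<lambda>k\<in>{0..<s}. sqrt (real N / real s) * magn N s \<sigma> k)"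

definition gauss :: "real \<Rightarrow> real \<Rightarrow> nat \<Rightarrow> (nat \<Rightarrow> real) measure" where
  "gauss \<beta> \<alpha> s = density (Rn s)
      (\<lambda>x. ennreal (exp (- quadA \<beta> \<alpha> s x / 2)
                    / (\<integral>y. exp (- quadA \<beta> \<alpha> s y / 2) \<partial>Rn s)))"

definition conv :: "nat \<Rightarrow> (nat \<Rightarrow> real) measure \<Rightarrow> (nat \<Rightarrow> real) measure \<Rightarrow> (nat \<Rightarrow> real) measure" where
  "conv s M1 M2 = distr (M1 \<Otimes>\<^sub>M M2) (Rn s) (\<lambda>(x, y). \<lambda>i\<in>{0..<s}. x i + y i)"

definition zN :: "real \<Rightarrow> real \<Rightarrow> nat \<Rightarrow> nat \<Rightarrow> real" where
  "zN \<beta> \<alpha> N s = (\<integral>x. exp (- (real N / real s) *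
        phiN \<beta> \<alpha> s (\<lambda>k. sqrt (real s / real N) * x k)) \<partial>Rn s)"

end

theory Submission
  imports Defs
begin


lemma Amat_sym: "Amat b a s i j = Amat b a s j i"
  unfolding Amat_def by auto

lemma quadA_cong: "(\<And>i. i < s \<Longrightarrow> x i = y i) \<Longrightarrow> quadA b a s x = quadA b a s y"
  unfolding quadA_def by (intro sum.cong refl) auto

lemma Acol_cong: "(\<And>i. i < s \<Longrightarrow> x i = y i) \<Longrightarrow> Acol b a s x k = Acol b a s y k"
  unfolding Acol_def by (intro sum.cong refl) auto

lemma quadA_scale: "quadA b a s (\<lambda>i. r * x i) = r^2 * quadA b a s x"
  unfolding quadA_def by (simp add: sum_distrib_left power2_eq_square algebra_simps)

lemma Acol_scale: "Acol b a s (\<lambda>i. r * x i) k = r * Acol b a s x k"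
  unfolding Acol_def by (simp add: sum_distrib_left algebra_simps)

lemma quadA_diff:
  "quadA b a s (\<lambda>i. x i - y i) = quadA b a s x - 2 * (\<Sum>k<s. Acol b a s x k * y k) + quadA b a s y"
proof -
  let ?A = "Amat b a s"
  have e: "(\<Sum>i<s. \<Sum>j<s. (x i - y i) * ?A i j * (x j - y j)) =
     (\<Sum>i<s. \<Sum>j<s. x i * ?A i j * x j) - (\<Sum>i<s. \<Sum>j<s. x i * ?A i j * y j)
     - (\<Sum>i<s. \<Sum>j<s. y i * ?A i j * x j) + (\<Sum>i<s. \<Sum>j<s. y i * ?A i j * y j)"
    by (simp add: sum_subtractf sum.distrib algebra_simps)
  have s1: "(\<Sum>i<s. \<Sum>j<s. y i * ?A i j * x j) = (\<Sum>i<s. \<Sum>j<s. x i * ?A i j * y j)"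
    by (subst sum.swap) (simp add: Amat_sym mult_ac)
  have s2: "(\<Sum>k<s. Acol b a s x k * y k) = (\<Sum>i<s. \<Sum>j<s. x i * ?A i j * y j)"
    unfolding Acol_def by (subst sum.swap) (simp add: sum_distrib_right)
  show ?thesis unfolding quadA_def e s1 s2 by simp
qed

lemma sum_shift_mod:
  fixes h :: "nat \<Rightarrow> real"
  assumes "0 < s"
  shows "(\<Sum>i<s. h (Suc i mod s)) = (\<Sum>i<s. h i)"
proof -
  have inj: "inj_on (\<lambda>i. Suc i mod s) {..<s}"
    unfolding inj_on_def by (auto simp: mod_Suc split: if_splits)
  have "(\<lambda>i. Suc i mod s) ` {..<s} = {..<s}"
    using assms by (intro endo_inj_surj inj) auto
  then show ?thesis
    using sum.reindex[OF inj, of h] by simp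
qed

lemma quadA_expand:
  assumes "0 < s"
  shows "quadA b a s x = b * (\<Sum>i<s. x i * x i) + 2 * a * (\<Sum>i<s. x i * x (Suc i mod s))"
proof -
  have row: "(\<Sum>j<s. x i * Amat b a s i j * x j) =
      b * (x i * x i) + a * (x i * x (Suc i mod s)) + a * (\<Sum>j<s. if i = Suc j mod s then x i * x j else 0)"
    if "i < s" for i
  proof -
    have pt: "x i * Amat b a s i j * x j = b * (if j = i then x i * x j else 0)
       + a * (if j = Suc i mod s then x i * x j else 0) + a * (if i = Suc j mod s then x i * x j else 0)" for j
      unfolding Amat_def by (simp add: distrib_left distrib_right)
    have "Suc i mod s < s" using assms by simp
    then show ?thesis using that
      by (simp only: pt sum.distrib sum_distrib_left[symmetric]) (simp add: sum.delta')
  qed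
  have sw: "(\<Sum>i<s. \<Sum>j<s. if i = Suc j mod s then x i * x j else 0) = (\<Sum>j<s. x (Suc j mod s) * x j)"
    using assms by (subst sum.swap) simp
  show ?thesis
    unfolding quadA_def using row sw
    by (simp add: sum.distrib sum_distrib_left[symmetric] mult_ac)
qed

lemma quadA_lower:
  assumes "0 < s" "0 \<le> a"
  shows "(b - 2 * a) * (\<Sum>i<s. x i * x i) \<le> quadA b a s x"
proof -
  let ?S = "\<Sum>i<s. x i * x i" and ?C = "\<Sum>i<s. x i * x (Suc i mod s)"
  have "0 \<le> (\<Sum>i<s. (x i + x (Suc i mod s)) * (x i + x (Suc i mod s)))"
    by (intro sum_nonneg) simp
  also have "\<dots> = ?S + (\<Sum>i<s. x (Suc i mod s) * x (Suc i mod s)) + 2 * ?C"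
    by (simp add: sum.distrib algebra_simps sum_distrib_left)
  also have "(\<Sum>i<s. x (Suc i mod s) * x (Suc i mod s)) = ?S"
    using sum_shift_mod[OF assms(1), of "\<lambda>i. x i * x i"] by simp
  finally have "- ?S \<le> ?C" by simp
  then have "a * (- ?S) \<le> a * ?C" using assms(2) by (rule mult_left_mono)
  then show ?thesis using quadA_expand[OF assms(1), of b a x] by (simp add: algebra_simps)
qed

lemma comp_meas[measurable]: "(\<lambda>x. x i) \<in> borel_measurable (Rn s)"
proof (cases "i < s")
  case True
  then show ?thesis unfolding Rn_def
    using measurable_component_singleton[of i "{0..<s}" "\<lambda>_. lborel::real measure"] by simp
next
  case False
  have eq: "\<And>x. x \<in> space (Rn s) \<Longrightarrow> x i = undefined"
    using False by (auto simp: Rn_def space_PiM PiE_def extensional_def)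
  show ?thesis using measurable_cong[of "Rn s" "\<lambda>x. x i" "\<lambda>x. undefined" borel] eq by simp
qed

lemma quadA_meas[measurable]: "quadA b a s \<in> borel_measurable (Rn s)"
  unfolding quadA_def by measurable

lemma Acol_meas[measurable]: "(\<lambda>x. Acol b a s x k) \<in> borel_measurable (Rn s)"
  unfolding Acol_def by measurable

lemma cosh_meas[measurable]: "(cosh::real\<Rightarrow>real) \<in> borel_measurable borel"
  by (intro borel_measurable_continuous_onI continuous_intros)

lemma phiN_meas[measurable]: "(\<lambda>x. phiN b a s (\<lambda>k. r * x k)) \<in> borel_measurable (Rn s)"
proof -
  have "(\<lambda>x. phiN b a s (\<lambda>k. r * x k)) = (\<lambda>x. r^2 * quadA b a s x / 2 - (\<Sum>k<s. ln (cosh (r * Acol b a s x k))))"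
    by (simp add: phiN_def quadA_scale Acol_scale)
  then show ?thesis by (simp del: cosh_real_ge_1)
qed

lemma psf_lborel: "product_sigma_finite (\<lambda>_::nat. lborel::real measure)"
  unfolding product_sigma_finite_def by (auto intro: sigma_finite_lborel)

lemma integrable_gauss1:
  assumes "0 < c"
  shows "integrable lborel (\<lambda>t::real. exp (- c / 2 * t^2))"
proof -
  let ?\<sigma> = "1 / sqrt c"
  have "integrable lborel (\<lambda>t. sqrt (2 * pi * ?\<sigma>^2) * normal_density 0 ?\<sigma> t)"
    using assms by (intro integrable_mult_right integrable_normal_density) simp
  moreover have "(\<lambda>t. sqrt (2 * pi * ?\<sigma>^2) * normal_density 0 ?\<sigma> t) = (\<lambda>t. exp (- c / 2 * t^2))"
  proof (rule ext)
    fix t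
    have s2: "(1 / sqrt c)^2 = 1 / c" using assms by (simp add: power_divide)
    have "sqrt (2 * pi * ?\<sigma>^2) * normal_density 0 ?\<sigma> t = exp (- (t^2 / (2 * (1/c))))"
      unfolding normal_density_def s2 using assms by simp
    also have "\<dots> = exp (- c / 2 * t^2)" by (simp add: field_simps)
    finally show "sqrt (2 * pi * ?\<sigma>^2) * normal_density 0 ?\<sigma> t = exp (- c / 2 * t^2)" .
  qed
  ultimately show ?thesis by metis
qed

lemma gauss_integrable:
  assumes "0 < s" "0 \<le> a" "2 * a < b"
  shows "integrable (Rn s) (\<lambda>x. exp (- quadA b a s x / 2))"
proof (rule Bochner_Integration.integrable_bound)
  let ?c = "b - 2 * a"
  interpret product_sigma_finite "\<lambda>_::nat. lborel::real measure" by (rule psf_lborel)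
  show "integrable (Rn s) (\<lambda>x. \<Prod>i\<in>{0..<s}. exp (- ?c / 2 * (x i)^2))"
    unfolding Rn_def using assms
    by (intro product_integrable_prod integrable_gauss1) auto
  show "(\<lambda>x. exp (- quadA b a s x / 2)) \<in> borel_measurable (Rn s)" by measurable
  show "AE x in Rn s. norm (exp (- quadA b a s x / 2)) \<le> norm (\<Prod>i\<in>{0..<s}. exp (- ?c / 2 * (x i)^2))"
  proof (intro AE_I2)
    fix x
    have "(\<Prod>i\<in>{0..<s}. exp (- ?c / 2 * (x i)^2)) = exp (- ?c / 2 * (\<Sum>i<s. x i * x i))"
      by (simp add: exp_sum[symmetric] sum_distrib_left atLeast0LessThan power2_eq_square)
    moreover have "exp (- quadA b a s x / 2) \<le> exp (- ?c / 2 * (\<Sum>i<s. x i * x i))"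
    proof -
      have h: "?c * (\<Sum>i<s. x i * x i) \<le> quadA b a s x" using quadA_lower[OF assms(1,2), of b x] by simp
      have "- quadA b a s x / 2 \<le> - ?c / 2 * (\<Sum>i<s. x i * x i)" using h by (simp add: field_simps)
      then show ?thesis by simp
    qed
    ultimately show "norm (exp (- quadA b a s x / 2)) \<le> norm (\<Prod>i\<in>{0..<s}. exp (- ?c / 2 * (x i)^2))"
      by (simp add: prod_nonneg)
  qed
qed



lemma cosh_sum:
  fixes t :: "nat \<Rightarrow> real"
  shows "(\<Sum>\<sigma>\<in>spins N. 2 powr (- real N) * exp (\<Sum>i<N. t i * \<sigma> i)) = (\<Prod>i<N. cosh (t i))"
proof -
  have "(\<Sum>\<sigma>\<in>spins N. exp (\<Sum>i<N. t i * \<sigma> i)) = (\<Sum>\<sigma>\<in>spins N. \<Prod>i\<in>{0..<N}. exp (t i * \<sigma> i))"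
    by (simp add: exp_sum atLeast0LessThan)
  also have "\<dots> = (\<Prod>i\<in>{0..<N}. \<Sum>y\<in>{-1,1}. exp (t i * y))"
    unfolding spins_def by (rule prod_sum_PiE[symmetric]) auto
  also have "\<dots> = (\<Prod>i\<in>{0..<N}. 2 * cosh (t i))"
    by (intro prod.cong refl) (simp add: cosh_def)
  also have "\<dots> = 2 ^ N * (\<Prod>i<N. cosh (t i))"
    by (simp add: prod.distrib atLeast0LessThan)
  finally have "(\<Sum>\<sigma>\<in>spins N. exp (\<Sum>i<N. t i * \<sigma> i)) = 2 ^ N * (\<Prod>i<N. cosh (t i))" .
  moreover have "2 powr (- real N) * 2 ^ N = (1::real)"
    by (simp add: powr_minus powr_realpow)
  ultimately have "2 powr (- real N) * (\<Sum>\<sigma>\<in>spins N. exp (\<Sum>i<N. t i * \<sigma> i)) = (\<Prod>i<N. cosh (t i))"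
    by (metis mult.assoc mult_1)
  then show ?thesis by (simp only: sum_distrib_left)
qed

lemma block_eq:
  fixes b k s :: nat
  assumes "0 < b" "k < s"
  shows "{i. i < s * b \<and> i div b = k} = {k * b..<k * b + b}"
proof -
  have iff: "i div b = k \<longleftrightarrow> k * b \<le> i \<and> i < k * b + b" for i
  proof
    assume "i div b = k"
    moreover have "i div b * b \<le> i" using div_mult_mod_eq[of i b] by linarith
    moreover have "i < b + i div b * b" using div_mult_mod_eq[of i b] mod_less_divisor[OF assms(1), of i] by linarith
    ultimately show "k * b \<le> i \<and> i < k * b + b" by (metis add.commute)
  next
    assume "k * b \<le> i \<and> i < k * b + b"
    then show "i div b = k" by (intro div_nat_eqI) (auto simp: mult.commute)
  qed
  have le: "k * b + b \<le> s * b"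
  proof -
    have "Suc k \<le> s" using assms by simp
    then have "Suc k * b \<le> s * b" by (rule mult_le_mono1)
    then show ?thesis by simp
  qed
  show ?thesis
  proof (rule set_eqI)
    fix i
    show "i \<in> {i. i < s * b \<and> i div b = k} \<longleftrightarrow> i \<in> {k * b..<k * b + b}"
      using iff[of i] le by (simp only: mem_Collect_eq atLeastLessThan_iff) linarith
  qed
qed

lemma block_card:
  fixes b k s :: nat
  assumes "0 < b" "k < s"
  shows "card {i. i < s * b \<and> i div b = k} = b"
  using block_eq[OF assms] by simp

lemma div_lt:
  fixes i b s :: nat
  assumes "i < s * b"
  shows "i div b < s"
  using assms by (metis div_less_iff_less_mult mult.commute mult_zero_right not_less0 zero_less_iff_neq_zero)

lemma block_sum:
  fixes h :: "nat \<Rightarrow> real" and b s :: nat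
  assumes "0 < b"
  shows "(\<Sum>k<s. \<Sum>i\<in>{i. i < s * b \<and> i div b = k}. h i) = (\<Sum>i<s * b. h i)"
proof -
  have "(\<lambda>i. i div b) ` {..<s*b} \<subseteq> {..<s}" using div_lt by auto
  from sum.group[OF _ _ this, of h] show ?thesis by simp
qed

lemma block_prod:
  fixes h :: "nat \<Rightarrow> real" and b s :: nat
  assumes "0 < b"
  shows "(\<Prod>i<s * b. h (i div b)) = (\<Prod>k<s. h k ^ b)"
proof -
  have "(\<Prod>i<s * b. h (i div b)) = (\<Prod>k<s. h k ^ card {i. i < s * b \<and> i div b = k})"
  proof -
    have "(\<lambda>i. i div b) ` {..<s*b} \<subseteq> {..<s}" using div_lt by auto
    from prod.group[OF _ _ this, of "\<lambda>i. h (i div b)"] show ?thesis by simp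
  qed
  also have "\<dots> = (\<Prod>k<s. h k ^ b)"
    using block_card[OF assms] by (intro prod.cong refl) simp
  finally show ?thesis .
qed



lemma pointwise:
  fixes x :: "nat \<Rightarrow> real" and s b N :: nat and \<beta> \<alpha> :: real
  assumes "0 < s" "0 < b" "N = s * b"
  shows "(\<Sum>\<sigma>\<in>spins N. gibbs_weight \<beta> \<alpha> N s \<sigma> *
            exp (- quadA \<beta> \<alpha> s (\<lambda>i. x i - sqrt (real N / real s) * magn N s \<sigma> i) / 2))
       = exp (- (real N / real s) * phiN \<beta> \<alpha> s (\<lambda>k. sqrt (real s / real N) * x k))"
proof -
  define c where "c = sqrt (real s / real N)"
  define r where "r = sqrt (real N / real s)"
  define a where "a = Acol \<beta> \<alpha> s x"
  define q where "q = quadA \<beta> \<alpha> s x"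
  have Npos: "0 < N" using assms by simp
  have r2: "r^2 = real N / real s" unfolding r_def by simp
  have c2: "c^2 = real s / real N" unfolding c_def by simp
  have rc: "r * (real s / real N) = c"
    unfolding r_def c_def using assms Npos
    by (simp add: real_sqrt_divide field_simps)
  have bN: "real N / real s = real b" using assms by simp
  have Nb: "N div s = b" using assms by simp
  let ?Y = "\<lambda>\<sigma> k. r * magn N s \<sigma> k"
  let ?L = "\<lambda>\<sigma>. \<Sum>i<N. (c * a (i div b)) * \<sigma> i"
  have L: "(\<Sum>k<s. a k * ?Y \<sigma> k) = ?L \<sigma>" for \<sigma> :: "nat \<Rightarrow> real"
  proof -
    have "(\<Sum>k<s. a k * ?Y \<sigma> k) = (\<Sum>k<s. \<Sum>i\<in>{i. i < s * b \<and> i div b = k}. c * a (i div b) * \<sigma> i)"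
    proof (intro sum.cong refl)
      fix k assume "k \<in> {..<s}"
      have "a k * ?Y \<sigma> k = a k * (r * (real s / real N)) * (\<Sum>i\<in>{i. i < s * b \<and> i div b = k}. \<sigma> i)"
        unfolding magn_def Nb using assms(3) by simp
      also have "\<dots> = (\<Sum>i\<in>{i. i < s * b \<and> i div b = k}. c * a (i div b) * \<sigma> i)"
        unfolding rc by (simp add: sum_distrib_left mult_ac)
      finally show "a k * ?Y \<sigma> k = \<dots>" .
    qed
    also have "\<dots> = ?L \<sigma>" unfolding assms(3) by (rule block_sum[OF assms(2)])
    finally show ?thesis .
  qed
  have trm: "gibbs_weight \<beta> \<alpha> N s \<sigma> * exp (- quadA \<beta> \<alpha> s (\<lambda>i. x i - ?Y \<sigma> i) / 2)
      = exp (- q / 2) * (2 powr (- real N) * exp (?L \<sigma>))" for \<sigma>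
  proof -
    have qY: "quadA \<beta> \<alpha> s (?Y \<sigma>) = real N / real s * quadA \<beta> \<alpha> s (magn N s \<sigma>)"
      using quadA_scale[of \<beta> \<alpha> s r "magn N s \<sigma>"] r2 by simp
    have qd: "quadA \<beta> \<alpha> s (\<lambda>i. x i - ?Y \<sigma> i) = q - 2 * ?L \<sigma> + real N / real s * quadA \<beta> \<alpha> s (magn N s \<sigma>)"
      using quadA_diff[of \<beta> \<alpha> s x "?Y \<sigma>"] qY L[of \<sigma>] unfolding q_def a_def by simp
    show ?thesis unfolding gibbs_weight_def qd
      by (simp add: exp_add[symmetric] exp_diff field_simps) 
  qed
  have "(\<Sum>\<sigma>\<in>spins N. gibbs_weight \<beta> \<alpha> N s \<sigma> * exp (- quadA \<beta> \<alpha> s (\<lambda>i. x i - ?Y \<sigma> i) / 2))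
      = exp (- q / 2) * (\<Sum>\<sigma>\<in>spins N. 2 powr (- real N) * exp (?L \<sigma>))"
    unfolding trm by (simp add: sum_distrib_left)
  also have "(\<Sum>\<sigma>\<in>spins N. 2 powr (- real N) * exp (?L \<sigma>)) = (\<Prod>i<N. cosh (c * a (i div b)))"
    by (rule cosh_sum)
  also have "\<dots> = (\<Prod>k<s. cosh (c * a k) ^ b)"
    using block_prod[OF assms(2), of "\<lambda>k. cosh (c * a k)" s] assms(3) by simp
  finally have lhs: "(\<Sum>\<sigma>\<in>spins N. gibbs_weight \<beta> \<alpha> N s \<sigma> * exp (- quadA \<beta> \<alpha> s (\<lambda>i. x i - ?Y \<sigma> i) / 2))
      = exp (- q / 2) * (\<Prod>k<s. cosh (c * a k) ^ b)" .
  have "phiN \<beta> \<alpha> s (\<lambda>k. c * x k) = c^2 * q / 2 - (\<Sum>k<s. ln (cosh (c * a k)))"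
    unfolding phiN_def quadA_scale Acol_scale q_def a_def by simp
  then have "- (real N / real s) * phiN \<beta> \<alpha> s (\<lambda>k. c * x k) = - q / 2 + (\<Sum>k<s. real b * ln (cosh (c * a k)))"
    using c2 bN assms Npos by (simp add: field_simps sum_distrib_left)
  then have "exp (- (real N / real s) * phiN \<beta> \<alpha> s (\<lambda>k. c * x k)) = exp (- q / 2) * (\<Prod>k<s. exp (real b * ln (cosh (c * a k))))"
    by (simp only: exp_add exp_sum finite_lessThan)
  also have "(\<Prod>k<s. exp (real b * ln (cosh (c * a k)))) = (\<Prod>k<s. cosh (c * a k) ^ b)"
    by (intro prod.cong refl) (simp add: exp_of_nat_mult)
  finally show ?thesis using lhs unfolding c_def r_def by simp
qed



lemma space_Rn: "space (Rn s) = PiE {0..<s} (\<lambda>_. UNIV)"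
  unfolding Rn_def by (simp add: space_PiM)

lemma emeasure_lborel_translate:
  assumes "A \<in> sets lborel"
  shows "emeasure lborel ((\<lambda>t. c + t) -` A) = emeasure lborel (A :: real set)"
proof -
  have "emeasure (distr lborel borel ((+) c)) A = emeasure lborel A"
    by (simp add: lborel_distr_plus)
  moreover have "emeasure (distr lborel borel ((+) c)) A = emeasure lborel ((+) c -` A \<inter> space lborel)"
    using assms by (intro emeasure_distr) auto
  ultimately show ?thesis by simp
qed

lemma Rn_translate_meas: "(\<lambda>y. \<lambda>i\<in>{0..<s}. v i + y i) \<in> measurable (Rn s) (Rn s)"
  unfolding Rn_def by measurable

lemma Rn_translate: "distr (Rn s) (Rn s) (\<lambda>y. \<lambda>i\<in>{0..<s}. v i + y i) = Rn s"
proof -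
  interpret product_sigma_finite "\<lambda>_::nat. lborel::real measure" by (rule psf_lborel)
  let ?T = "\<lambda>y. \<lambda>i\<in>{0..<s}. v i + y i"
  show ?thesis unfolding Rn_def
  proof (rule PiM_eqI)
    show "finite {0..<s}" by simp
    show "sets (distr (PiM {0..<s} (\<lambda>_. lborel)) (PiM {0..<s} (\<lambda>_. lborel)) ?T) = sets (PiM {0..<s} (\<lambda>_. lborel))"
      by simp
    fix A :: "nat \<Rightarrow> real set" assume A: "\<And>i. i \<in> {0..<s} \<Longrightarrow> A i \<in> sets lborel"
    have pre: "?T -` PiE {0..<s} A \<inter> space (PiM {0..<s} (\<lambda>_. lborel::real measure)) = PiE {0..<s} (\<lambda>i. (\<lambda>t. v i + t) -` A i)"
      by (auto simp: space_PiM PiE_def Pi_def extensional_def)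
    have "emeasure (distr (PiM {0..<s} (\<lambda>_. lborel)) (PiM {0..<s} (\<lambda>_. lborel)) ?T) (PiE {0..<s} A)
        = emeasure (PiM {0..<s} (\<lambda>_. lborel)) (PiE {0..<s} (\<lambda>i. (\<lambda>t. v i + t) -` A i))"
      using Rn_translate_meas[of v s] A
      by (subst emeasure_distr) (auto simp: Rn_def pre sets_PiM_I_finite)
    also have "\<dots> = (\<Prod>i\<in>{0..<s}. emeasure lborel ((\<lambda>t. v i + t) -` A i))"
    proof (intro emeasure_PiM)
      fix i assume "i \<in> {0..<s}"
      then have "A i \<in> sets borel" using A by simp
      then show "(\<lambda>t. v i + t) -` A i \<in> sets lborel"
        by (simp add: measurable_sets_borel[of "\<lambda>t. v i + t" borel])
    qed simp
    also have "\<dots> = (\<Prod>i\<in>{0..<s}. emeasure lborel (A i))"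
      using A by (intro prod.cong refl emeasure_lborel_translate) auto
    finally show "emeasure (distr (PiM {0..<s} (\<lambda>_. lborel)) (PiM {0..<s} (\<lambda>_. lborel)) ?T) (PiE {0..<s} A)
        = (\<Prod>i\<in>{0..<s}. emeasure lborel (A i))" .
  qed
qed

lemma nn_integral_Rn_translate:
  assumes "h \<in> borel_measurable (Rn s)"
  shows "(\<integral>\<^sup>+ y. h (\<lambda>i\<in>{0..<s}. v i + y i) \<partial>Rn s) = (\<integral>\<^sup>+ x. h x \<partial>Rn s)"
proof -
  have "(\<integral>\<^sup>+ x. h x \<partial>Rn s) = (\<integral>\<^sup>+ x. h x \<partial>distr (Rn s) (Rn s) (\<lambda>y. \<lambda>i\<in>{0..<s}. v i + y i))"
    by (simp add: Rn_translate)
  also have "\<dots> = (\<integral>\<^sup>+ y. h (\<lambda>i\<in>{0..<s}. v i + y i) \<partial>Rn s)"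
    using assms by (intro nn_integral_distr Rn_translate_meas) auto
  finally show ?thesis by simp
qed

lemma Rn_space_pos: "emeasure (Rn s) (space (Rn s)) \<noteq> 0"
proof -
  interpret product_sigma_finite "\<lambda>_::nat. lborel::real measure" by (rule psf_lborel)
  have "emeasure (Rn s) (PiE {0..<s} (\<lambda>_. {0..1})) = (\<Prod>i\<in>{0..<s}. emeasure lborel {0..1::real})"
    unfolding Rn_def by (intro emeasure_PiM) auto
  also have "\<dots> = 1" by simp
  finally have "emeasure (Rn s) (PiE {0..<s} (\<lambda>_. {0..1})) = 1" .
  moreover have "emeasure (Rn s) (PiE {0..<s} (\<lambda>_. {0..1})) \<le> emeasure (Rn s) (space (Rn s))"
    using sets.top[of "Rn s"] by (intro emeasure_mono) (auto simp: space_Rn)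
  ultimately show ?thesis by auto
qed

lemma G_pos:
  assumes "0 < s" "0 \<le> a" "2 * a < b"
  shows "0 < (\<integral>y. exp (- quadA b a s y / 2) \<partial>Rn s)"
proof -
  have int: "integrable (Rn s) (\<lambda>y. exp (- quadA b a s y / 2))" by (rule gauss_integrable[OF assms])
  have "(\<integral>y. exp (- quadA b a s y / 2) \<partial>Rn s) \<noteq> 0"
  proof
    assume "(\<integral>y. exp (- quadA b a s y / 2) \<partial>Rn s) = 0"
    then have "AE y in Rn s. exp (- quadA b a s y / 2) = 0"
      using integral_nonneg_eq_0_iff_AE[OF int] by simp
    then have "AE y in Rn s. False" by simp
    then show False using Rn_space_pos[of s] by (simp add: eventually_False ae_filter_eq_bot_iff)
  qed
  moreover have "0 \<le> (\<integral>y. exp (- quadA b a s y / 2) \<partial>Rn s)" by simp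
  ultimately show ?thesis by linarith
qed



lemma quadA_shift_meas[measurable]: "(\<lambda>x. quadA b a s (\<lambda>i. x i - v i)) \<in> borel_measurable (Rn s)"
  unfolding quadA_def by measurable

theorem lemma4p1:
  fixes \<beta> \<alpha> :: real and sN :: "nat \<Rightarrow> nat" and N :: nat
  assumes "0 < \<alpha>" and "2 * \<alpha> < \<beta>"
    and "mono sN" and "\<And>n. 0 < sN n" and "\<And>n. sN n dvd n"
    and "0 < N"
  shows "conv (sN N) (magn_law \<beta> \<alpha> N (sN N)) (gauss \<beta> \<alpha> (sN N)) =
         density (Rn (sN N))
           (\<lambda>x. ennreal (exp (- (real N / real (sN N)) *
                   phiN \<beta> \<alpha> (sN N) (\<lambda>k. sqrt (real (sN N) / real N) * x k))
                 / zN \<beta> \<alpha> N (sN N)))"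
proof -
  define s where "s = sN N"
  have spos: "0 < s" using assms(4) unfolding s_def by simp
  obtain b where Nsb: "N = s * b" using assms(5)[of N] unfolding s_def by (auto elim!: dvdE)
  have bpos: "0 < b" using Nsb assms(6) by (auto intro: gr0I)
  have a0: "0 \<le> \<alpha>" using assms(1) by simp
  define G where "G = (\<integral>y. exp (- quadA \<beta> \<alpha> s y / 2) \<partial>Rn s)"
  define Z where "Z = gibbs_Z \<beta> \<alpha> N s"
  define Y where "Y = (\<lambda>\<sigma>. \<lambda>k\<in>{0..<s}. sqrt (real N / real s) * magn N s \<sigma> k)"
  define T where "T = (\<lambda>z::(nat\<Rightarrow>real) \<times> (nat\<Rightarrow>real). \<lambda>i\<in>{0..<s}. fst z i + snd z i)"
  define f where "f = (\<lambda>x. exp (- (real N / real s) * phiN \<beta> \<alpha> s (\<lambda>k. sqrt (real s / real N) * x k)))"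
  define w where "w = (\<lambda>\<sigma>. gibbs_weight \<beta> \<alpha> N s \<sigma> / Z)"
  define g where "g = (\<lambda>y. exp (- quadA \<beta> \<alpha> s y / 2) / G)"
  define \<mu> where "\<mu> = magn_law \<beta> \<alpha> N s"
  define \<gamma> where "\<gamma> = gauss \<beta> \<alpha> s"
  have intG: "integrable (Rn s) (\<lambda>y. exp (- quadA \<beta> \<alpha> s y / 2))"
    using gauss_integrable[OF spos a0 assms(2)] .
  have Gpos: "0 < G" unfolding G_def using G_pos[OF spos a0 assms(2)] .
  have fin: "finite (spins N)" unfolding spins_def by (simp add: finite_PiE)
  have ne: "spins N \<noteq> {}" unfolding spins_def by (simp add: PiE_eq_empty_iff)
  have wpos: "0 < gibbs_weight \<beta> \<alpha> N s \<sigma>" for \<sigma> unfolding gibbs_weight_def by simp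
  have Zpos: "0 < Z" unfolding Z_def gibbs_Z_def using fin ne wpos by (intro sum_pos) auto
  have gibbs_eq: "gibbs \<beta> \<alpha> N s = density (count_space (spins N)) (\<lambda>\<sigma>. ennreal (w \<sigma>))"
    unfolding gibbs_def w_def Z_def ..
  have sets_gibbs: "sets (gibbs \<beta> \<alpha> N s) = sets (count_space (spins N))"
    unfolding gibbs_def by simp
  have Y_meas: "Y \<in> measurable (gibbs \<beta> \<alpha> N s) (Rn s)"
    unfolding measurable_cong_sets[OF sets_gibbs refl] by (simp add: Y_def space_Rn)
  have prob_gibbs: "prob_space (gibbs \<beta> \<alpha> N s)"
  proof (rule prob_spaceI)
    have "emeasure (gibbs \<beta> \<alpha> N s) (space (gibbs \<beta> \<alpha> N s))
        = (\<integral>\<^sup>+ \<sigma>. ennreal (w \<sigma>) * indicator (spins N) \<sigma> \<partial>count_space (spins N))"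
      unfolding gibbs_eq by (subst emeasure_density) auto
    also have "\<dots> = (\<Sum>\<sigma>\<in>spins N. ennreal (w \<sigma>) * indicator (spins N) \<sigma>)"
      using fin by (rule nn_integral_count_space_finite)
    also have "\<dots> = (\<Sum>\<sigma>\<in>spins N. ennreal (w \<sigma>))"
      by (intro sum.cong refl) simp
    also have "\<dots> = ennreal (\<Sum>\<sigma>\<in>spins N. w \<sigma>)"
      using wpos Zpos by (intro sum_ennreal) (simp add: w_def less_imp_le)
    also have "(\<Sum>\<sigma>\<in>spins N. w \<sigma>) = 1"
      unfolding w_def using Zpos by (simp add: sum_divide_distrib[symmetric] Z_def gibbs_Z_def)
    finally show "emeasure (gibbs \<beta> \<alpha> N s) (space (gibbs \<beta> \<alpha> N s)) = 1" by simp
  qed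
  have mu_eq: "\<mu> = distr (gibbs \<beta> \<alpha> N s) (Rn s) Y" unfolding \<mu>_def magn_law_def Y_def ..
  have prob_mu: "prob_space \<mu>" unfolding mu_eq using prob_gibbs Y_meas by (rule prob_space.prob_space_distr)
  have g_meas: "(\<lambda>y. g y) \<in> borel_measurable (Rn s)" unfolding g_def by measurable
  have gnn: "0 \<le> g y" for y unfolding g_def using Gpos by simp
  have gamma_eq: "\<gamma> = density (Rn s) (\<lambda>y. ennreal (g y))" unfolding \<gamma>_def gauss_def g_def G_def ..
  have prob_gamma: "prob_space \<gamma>"
  proof (rule prob_spaceI)
    have "emeasure \<gamma> (space \<gamma>) = (\<integral>\<^sup>+ y. ennreal (g y) \<partial>Rn s)"
      unfolding gamma_eq using g_meas by (subst emeasure_density) (auto intro!: nn_integral_cong)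
    also have "\<dots> = ennreal (\<integral>y. g y \<partial>Rn s)"
      using intG gnn unfolding g_def by (intro nn_integral_eq_integral) auto
    also have "(\<integral>y. g y \<partial>Rn s) = 1"
      unfolding g_def integral_divide_zero G_def[symmetric] using Gpos by simp
    finally show "emeasure \<gamma> (space \<gamma>) = 1" by simp
  qed
  interpret pp: pair_prob_space \<mu> \<gamma>
    using prob_mu prob_gamma
    by (simp add: pair_prob_space_def pair_sigma_finite_def prob_space_imp_sigma_finite)
  have sets_mu: "sets \<mu> = sets (Rn s)" unfolding \<mu>_def magn_law_def by simp
  have sets_gamma: "sets \<gamma> = sets (Rn s)" unfolding \<gamma>_def gauss_def by simp
  have T_meas: "T \<in> measurable (\<mu> \<Otimes>\<^sub>M \<gamma>) (Rn s)"
    unfolding measurable_cong_sets[OF sets_pair_measure_cong[OF sets_mu sets_gamma] refl] T_def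
    unfolding Rn_def by measurable
  have conv_eq: "conv s \<mu> \<gamma> = distr (\<mu> \<Otimes>\<^sub>M \<gamma>) (Rn s) T"
    unfolding conv_def T_def by (simp add: case_prod_beta')
  have f_meas: "(\<lambda>x. ennreal (f x / (Z * G))) \<in> borel_measurable (Rn s)"
    unfolding f_def by measurable
  have fnn: "0 \<le> f x / (Z * G)" for x unfolding f_def using Zpos Gpos by simp
  have pw: "(\<Sum>\<sigma>\<in>spins N. w \<sigma> * g (\<lambda>i. x i - Y \<sigma> i)) = f x / (Z * G)" for x
  proof -
    have qc: "quadA \<beta> \<alpha> s (\<lambda>i. x i - Y \<sigma> i) = quadA \<beta> \<alpha> s (\<lambda>i. x i - sqrt (real N / real s) * magn N s \<sigma> i)" for \<sigma>
      by (rule quadA_cong) (simp add: Y_def)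
    have "(\<Sum>\<sigma>\<in>spins N. w \<sigma> * g (\<lambda>i. x i - Y \<sigma> i))
       = (\<Sum>\<sigma>\<in>spins N. gibbs_weight \<beta> \<alpha> N s \<sigma> *
            exp (- quadA \<beta> \<alpha> s (\<lambda>i. x i - sqrt (real N / real s) * magn N s \<sigma> i) / 2)) / (Z * G)"
      unfolding w_def g_def qc by (simp add: sum_divide_distrib)
    also have "\<dots> = f x / (Z * G)"
      unfolding pointwise[OF spos bpos Nsb] f_def ..
    finally show ?thesis .
  qed
  have key: "emeasure (conv s \<mu> \<gamma>) B = (\<integral>\<^sup>+ x. ennreal (f x / (Z * G)) * indicator B x \<partial>Rn s)"
    if B: "B \<in> sets (Rn s)" for B
  proof -
    have ind_meas: "(\<lambda>z. indicator B (T z) :: ennreal) \<in> borel_measurable (\<mu> \<Otimes>\<^sub>M \<gamma>)"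
      using measurable_compose[OF T_meas borel_measurable_indicator[OF B]] by simp
    define H where "H = (\<lambda>v. \<integral>\<^sup>+ y. indicator B (T (v, y)) \<partial>\<gamma>)"
    have H_meas: "H \<in> borel_measurable (Rn s)"
      using pp.M2.borel_measurable_nn_integral_fst[OF ind_meas]
      unfolding H_def measurable_cong_sets[OF sets_mu refl] by simp
    have TY: "T (v, y) = (\<lambda>i\<in>{0..<s}. v i + y i)" for v y unfolding T_def by simp
    have HY: "H (Y \<sigma>) = (\<integral>\<^sup>+ x. ennreal (g (\<lambda>i. x i - Y \<sigma> i)) * indicator B x \<partial>Rn s)" for \<sigma>
    proof -
      have ind2: "(\<lambda>y. indicator B (\<lambda>i\<in>{0..<s}. Y \<sigma> i + y i) :: ennreal) \<in> borel_measurable (Rn s)"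
        using measurable_compose[OF Rn_translate_meas[of "Y \<sigma>" s] borel_measurable_indicator[OF B]] by (simp add: comp_def)
      have "H (Y \<sigma>) = (\<integral>\<^sup>+ y. ennreal (g y) * indicator B (\<lambda>i\<in>{0..<s}. Y \<sigma> i + y i) \<partial>Rn s)"
        unfolding H_def TY gamma_eq using g_meas ind2 by (subst nn_integral_density) auto
      also have "\<dots> = (\<integral>\<^sup>+ y. (\<lambda>x. ennreal (g (\<lambda>i. x i - Y \<sigma> i)) * indicator B x) (\<lambda>i\<in>{0..<s}. Y \<sigma> i + y i) \<partial>Rn s)"
      proof (intro nn_integral_cong)
        fix y
        have "g (\<lambda>i. (\<lambda>i\<in>{0..<s}. Y \<sigma> i + y i) i - Y \<sigma> i) = g y"
          unfolding g_def by (subst quadA_cong[of s _ y]) auto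
        then show "ennreal (g y) * indicator B (\<lambda>i\<in>{0..<s}. Y \<sigma> i + y i) =
          (\<lambda>x. ennreal (g (\<lambda>i. x i - Y \<sigma> i)) * indicator B x) (\<lambda>i\<in>{0..<s}. Y \<sigma> i + y i)" by simp
      qed
      also have "\<dots> = (\<integral>\<^sup>+ x. ennreal (g (\<lambda>i. x i - Y \<sigma> i)) * indicator B x \<partial>Rn s)"
        using B by (intro nn_integral_Rn_translate) (simp add: g_def)
      finally show ?thesis .
    qed
    have "emeasure (conv s \<mu> \<gamma>) B = (\<integral>\<^sup>+ z. indicator B z \<partial>distr (\<mu> \<Otimes>\<^sub>M \<gamma>) (Rn s) T)"
      unfolding conv_eq using B by simp
    also have "\<dots> = (\<integral>\<^sup>+ z. indicator B (T z) \<partial>(\<mu> \<Otimes>\<^sub>M \<gamma>))"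
      using T_meas B by (intro nn_integral_distr) auto
    also have "\<dots> = (\<integral>\<^sup>+ v. H v \<partial>\<mu>)"
      unfolding H_def by (rule pp.M2.nn_integral_fst[OF ind_meas, symmetric, simplified])
    also have "\<dots> = (\<integral>\<^sup>+ \<sigma>. H (Y \<sigma>) \<partial>gibbs \<beta> \<alpha> N s)"
      unfolding mu_eq using Y_meas H_meas by (intro nn_integral_distr) auto
    also have "\<dots> = (\<integral>\<^sup>+ \<sigma>. ennreal (w \<sigma>) * H (Y \<sigma>) \<partial>count_space (spins N))"
      unfolding gibbs_eq by (rule nn_integral_density) auto
    also have "\<dots> = (\<Sum>\<sigma>\<in>spins N. ennreal (w \<sigma>) * H (Y \<sigma>))"
      using fin by (rule nn_integral_count_space_finite)
    also have "\<dots> = (\<Sum>\<sigma>\<in>spins N. (\<integral>\<^sup>+ x. ennreal (w \<sigma>) * (ennreal (g (\<lambda>i. x i - Y \<sigma> i)) * indicator B x) \<partial>Rn s))"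
      unfolding HY using B by (intro sum.cong refl nn_integral_cmult[symmetric]) (simp add: g_def)
    also have "\<dots> = (\<integral>\<^sup>+ x. (\<Sum>\<sigma>\<in>spins N. ennreal (w \<sigma>) * (ennreal (g (\<lambda>i. x i - Y \<sigma> i)) * indicator B x)) \<partial>Rn s)"
      using B by (intro nn_integral_sum[symmetric]) (simp add: g_def)
    also have "\<dots> = (\<integral>\<^sup>+ x. ennreal (f x / (Z * G)) * indicator B x \<partial>Rn s)"
    proof (intro nn_integral_cong)
      fix x
      have "(\<Sum>\<sigma>\<in>spins N. ennreal (w \<sigma>) * (ennreal (g (\<lambda>i. x i - Y \<sigma> i)) * indicator B x))
          = (\<Sum>\<sigma>\<in>spins N. ennreal (w \<sigma> * g (\<lambda>i. x i - Y \<sigma> i))) * indicator B x"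
      proof -
        have wnn: "0 \<le> w \<sigma>" for \<sigma> using wpos Zpos unfolding w_def by (simp add: less_imp_le)
        have "ennreal (w \<sigma>) * (ennreal (g (\<lambda>i. x i - Y \<sigma> i)) * indicator B x)
            = ennreal (w \<sigma> * g (\<lambda>i. x i - Y \<sigma> i)) * indicator B x" for \<sigma>
          using wnn[of \<sigma>] gnn by (simp add: ennreal_mult mult.assoc)
        then show ?thesis by (simp add: sum_distrib_right)
      qed
      also have "(\<Sum>\<sigma>\<in>spins N. ennreal (w \<sigma> * g (\<lambda>i. x i - Y \<sigma> i))) = ennreal (\<Sum>\<sigma>\<in>spins N. w \<sigma> * g (\<lambda>i. x i - Y \<sigma> i))"
        using wpos Zpos gnn by (intro sum_ennreal) (simp add: w_def less_imp_le)
      finally show "(\<Sum>\<sigma>\<in>spins N. ennreal (w \<sigma>) * (ennreal (g (\<lambda>i. x i - Y \<sigma> i)) * indicator B x))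
          = ennreal (f x / (Z * G)) * indicator B x" unfolding pw .
    qed
    finally show ?thesis .
  qed
  have conv_dens: "conv s \<mu> \<gamma> = density (Rn s) (\<lambda>x. ennreal (f x / (Z * G)))"
  proof (rule measure_eqI)
    show "sets (conv s \<mu> \<gamma>) = sets (density (Rn s) (\<lambda>x. ennreal (f x / (Z * G))))"
      unfolding conv_def by simp
    fix B assume "B \<in> sets (conv s \<mu> \<gamma>)"
    then have B: "B \<in> sets (Rn s)" unfolding conv_def by simp
    show "emeasure (conv s \<mu> \<gamma>) B = emeasure (density (Rn s) (\<lambda>x. ennreal (f x / (Z * G)))) B"
      using key[OF B] B f_meas by (simp add: emeasure_density)
  qed
  have "prob_space (conv s \<mu> \<gamma>)" unfolding conv_eq by (rule pp.prob_space_distr[OF T_meas])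
  then have "emeasure (conv s \<mu> \<gamma>) (space (Rn s)) = 1"
    using prob_space.emeasure_space_1 by (fastforce simp: conv_def)
  then have nn1: "(\<integral>\<^sup>+ x. ennreal (f x / (Z * G)) \<partial>Rn s) = 1"
    unfolding conv_dens using f_meas by (subst (asm) emeasure_density) (auto intro!: nn_integral_cong)
  have f_meas': "(\<lambda>x. f x / (Z * G)) \<in> borel_measurable (Rn s)" unfolding f_def by measurable
  have intf: "integrable (Rn s) (\<lambda>x. f x / (Z * G))"
    using f_meas' fnn nn1 by (intro integrableI_nonneg) auto
  have "ennreal (\<integral>x. f x / (Z * G) \<partial>Rn s) = 1"
  proof -
    have "(\<integral>\<^sup>+ x. ennreal (f x / (Z * G)) \<partial>Rn s) = ennreal (\<integral>x. f x / (Z * G) \<partial>Rn s)"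
      using fnn by (intro nn_integral_eq_integral[OF intf]) auto
    then show ?thesis using nn1 by metis
  qed
  then have "(\<integral>x. f x / (Z * G) \<partial>Rn s) = 1"
    using integral_nonneg_AE[of "\<lambda>x. f x / (Z * G)" "Rn s"] fnn by (simp del: integral_divide_zero)
  then have h: "(\<integral>x. f x \<partial>Rn s) / (Z * G) = 1" by (simp only: integral_divide_zero)
  have "(\<integral>x. f x \<partial>Rn s) = Z * G"
  proof -
    have "(\<integral>x. f x \<partial>Rn s) = (\<integral>x. f x \<partial>Rn s) / (Z * G) * (Z * G)" using Zpos Gpos by simp
    then show ?thesis unfolding h by simp
  qed
  then have zN_eq: "zN \<beta> \<alpha> N s = Z * G" unfolding zN_def f_def .
  show ?thesis
    unfolding s_def[symmetric] conv_dens[unfolded \<mu>_def \<gamma>_def] zN_eq f_def ..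
qed


end
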